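(* Let $A$ be a meet-complemented lattice in which $\Box x$ exists for every $x\in A$, and let $a,b\in A$. Then (i) $\Box(a\wedge b)\le\Box a\wedge\Box b$; (ii) $\Box a\vee\Box b\le\Box(a\vee b)$; (iii) $\Box(a\vee\neg b)\wedge b\le\Box a$; (iv) $\Box(a\vee b)\wedge\neg b\le\Box a$; (v) $\Box a\wedge\Box\neg a=0$; (vi) $\Box 0=0$; (vii) $\Box a=1$ iff $a=1$.
   Context: A meet-complemented lattice is a lattice $(L,\le)$ (not necessarily distributive) such that for every $a\in L$ the element $\neg a=\max\{b\in L: a\wedge b\le c\ \text{for all } c\in L\}$ exists; it is bounded with bottom $0$ and top $1$. For $a\in L$, $\Box a=\max\{b\in L: a\vee\neg b=1\}$. *)

theory Defs
  imports Main
begin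

definition is_max :: "'a::order set \<Rightarrow> 'a \<Rightarrow> bool" where
  "is_max S m \<longleftrightarrow> m \<in> S \<and> (\<forall>x\<in>S. x \<le> m)"

definition neg_set :: "'a::bounded_lattice \<Rightarrow> 'a set" where
  "neg_set a = {b. \<forall>c. inf a b \<le> c}"

definition mc_neg :: "'a::bounded_lattice \<Rightarrow> 'a" where
  "mc_neg a = (THE m. is_max (neg_set a) m)"

definition meet_complemented :: "'a::bounded_lattice itself \<Rightarrow> bool" where
  "meet_complemented _ \<longleftrightarrow> (\<forall>a::'a. \<exists>m. is_max (neg_set a) m)"

definition box_set :: "'a::bounded_lattice \<Rightarrow> 'a set" where
  "box_set a = {b. sup a (mc_neg b) = top}"

definition mc_box :: "'a::bounded_lattice \<Rightarrow> 'a" where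
  "mc_box a = (THE m. is_max (box_set a) m)"

end

theory Submission
  imports Defs
begin

lemma the_max: "is_max S (m::'a::order) \<Longrightarrow> (THE m. is_max S m) = m"
  by (rule the_equality) (auto simp: is_max_def intro: antisym)

lemma negI:
  fixes a x :: "'a::bounded_lattice"
  assumes "meet_complemented TYPE('a)"
  shows "x \<le> mc_neg a \<longleftrightarrow> inf a x = bot"
proof -
  obtain m where m: "is_max (neg_set a) m" using assms unfolding meet_complemented_def by blast
  have e: "mc_neg a = m" unfolding mc_neg_def using the_max[OF m] .
  have mem: "b \<in> neg_set a \<longleftrightarrow> inf a b = bot" for b
    unfolding neg_set_def using bot_unique by (auto intro: bot_unique[THEN iffD1])
  have "inf a m = bot" using m mem unfolding is_max_def by blast
  moreover have "x \<le> m" if "inf a x = bot" using m mem that unfolding is_max_def by blast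
  ultimately show ?thesis unfolding e
    by (metis bot_unique inf_mono order_refl)
qed

lemma boxI:
  fixes a x :: "'a::bounded_lattice"
  assumes mc: "meet_complemented TYPE('a)"
    and bx: "\<forall>x::'a. \<exists>m. is_max (box_set x) m"
  shows "x \<le> mc_box a \<longleftrightarrow> sup a (mc_neg x) = top"
proof -
  have anti: "mc_neg d \<le> mc_neg c" if "c \<le> d" for c d :: 'a
  proof -
    have "inf d (mc_neg d) = bot" using negI[OF mc] by blast
    then have "inf c (mc_neg d) = bot" using that by (metis bot_unique inf_mono order_refl)
    then show ?thesis using negI[OF mc] by blast
  qed
  obtain m where m: "is_max (box_set a) m" using bx by blast
  have e: "mc_box a = m" unfolding mc_box_def using the_max[OF m] .
  have "sup a (mc_neg m) = top" using m unfolding is_max_def box_set_def by blast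
  moreover have "x \<le> m" if "sup a (mc_neg x) = top" using m that unfolding is_max_def box_set_def by blast
  moreover have "sup a (mc_neg x) = top" if "sup a (mc_neg m) = top" "x \<le> m"
    using anti[OF that(2)] that(1) by (metis sup_mono order_refl top_unique)
  ultimately show ?thesis unfolding e by blast
qed

theorem proposition2:
  fixes a b :: "'a::bounded_lattice"
  assumes "meet_complemented TYPE('a)"
    and "\<forall>x::'a. \<exists>m. is_max (box_set x) m"
  shows "mc_box (inf a b) \<le> inf (mc_box a) (mc_box b)
     \<and> sup (mc_box a) (mc_box b) \<le> mc_box (sup a b)
     \<and> inf (mc_box (sup a (mc_neg b))) b \<le> mc_box a
     \<and> inf (mc_box (sup a b)) (mc_neg b) \<le> mc_box a
     \<and> inf (mc_box a) (mc_box (mc_neg a)) = bot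
     \<and> mc_box (bot::'a) = bot
     \<and> (mc_box a = top \<longleftrightarrow> a = top)"
proof -
  note N = negI[OF assms(1)]
  note B = boxI[OF assms]
  have anti: "mc_neg d \<le> mc_neg c" if "c \<le> d" for c d :: 'a
  proof -
    have "inf d (mc_neg d) = bot" using N by blast
    then have "inf c (mc_neg d) = bot" using that by (metis bot_unique inf_mono order_refl)
    then show ?thesis using N by blast
  qed
  have dn: "c \<le> mc_neg (mc_neg c)" for c :: 'a using N by (metis inf_commute order_refl)
  have bs: "sup x (mc_neg (mc_box x)) = top" for x :: 'a using B by blast
  have mono: "mc_box x \<le> mc_box y" if "x \<le> y" for x y :: 'a
    using B bs[of x] that by (metis sup_mono order_refl top_unique)
  have n1: "mc_neg (top::'a) = bot" using N by (metis inf_top_left order_refl)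
  have nsup: "mc_neg (sup x y) = inf (mc_neg x) (mc_neg y)" for x y :: 'a
  proof (rule antisym)
    show "mc_neg (sup x y) \<le> inf (mc_neg x) (mc_neg y)" using anti by simp
    have "x \<le> mc_neg (inf (mc_neg x) (mc_neg y))" "y \<le> mc_neg (inf (mc_neg x) (mc_neg y))"
      using anti dn by (meson inf_le1 inf_le2 order_trans)+
    then have "sup x y \<le> mc_neg (inf (mc_neg x) (mc_neg y))" by simp
    then show "inf (mc_neg x) (mc_neg y) \<le> mc_neg (sup x y)" using N by (metis inf_commute)
  qed
  have i: "mc_box (inf a b) \<le> inf (mc_box a) (mc_box b)" using mono by simp
  have ii: "sup (mc_box a) (mc_box b) \<le> mc_box (sup a b)" using mono by simp
  have iii: "inf (mc_box (sup a (mc_neg b))) b \<le> mc_box a"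
  proof -
    let ?c = "inf (mc_box (sup a (mc_neg b))) b"
    have "mc_neg b \<le> mc_neg ?c" "mc_neg (mc_box (sup a (mc_neg b))) \<le> mc_neg ?c" using anti by simp_all
    then have "sup (sup a (mc_neg b)) (mc_neg (mc_box (sup a (mc_neg b)))) \<le> sup a (mc_neg ?c)"
      by (meson le_supI le_supI1 le_supI2 order_refl le_supE)
    then show ?thesis using B bs by (metis top_unique)
  qed
  have iv: "inf (mc_box (sup a b)) (mc_neg b) \<le> mc_box a"
  proof -
    let ?c = "inf (mc_box (sup a b)) (mc_neg b)"
    have "b \<le> mc_neg ?c" using dn anti by (meson inf_le2 order_trans)
    moreover have "mc_neg (mc_box (sup a b)) \<le> mc_neg ?c" using anti by simp
    ultimately have "sup (sup a b) (mc_neg (mc_box (sup a b))) \<le> sup a (mc_neg ?c)"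
      by (meson le_supI le_supI1 le_supI2 order_refl)
    then show ?thesis using B bs by (metis top_unique)
  qed
  have v: "inf (mc_box a) (mc_box (mc_neg a)) = bot"
  proof -
    let ?c = "inf (mc_box a) (mc_box (mc_neg a))"
    have "sup a (mc_neg ?c) = top" "sup (mc_neg a) (mc_neg ?c) = top"
      using B[of ?c a] B[of ?c "mc_neg a"] by simp_all
    then have "inf (mc_neg a) (mc_neg (mc_neg ?c)) = bot"
      "inf (mc_neg (mc_neg a)) (mc_neg (mc_neg ?c)) = bot"
      using nsup n1 by metis+
    then have "mc_neg (mc_neg ?c) \<le> mc_neg (mc_neg a)" using N by blast
    then have "mc_neg (mc_neg ?c) = bot"
      using \<open>inf (mc_neg (mc_neg a)) (mc_neg (mc_neg ?c)) = bot\<close> by (simp add: inf_absorb2)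
    then show ?thesis using dn[of ?c] by (simp add: bot_unique)
  qed
  have vi: "mc_box (bot::'a) = bot"
  proof -
    have "mc_neg (mc_box (bot::'a)) = top" using bs[of bot] by simp
    then show ?thesis using dn[of "mc_box (bot::'a)"] n1 by (simp add: bot_unique)
  qed
  have vii: "mc_box a = top \<longleftrightarrow> a = top"
  proof
    assume "mc_box a = top" then show "a = top" using bs[of a] n1 by simp
  next
    assume "a = top" then show "mc_box a = top" using B[of top a] by (simp add: top_unique)
  qed
  show ?thesis using i ii iii iv v vi vii by blast
qed

end
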